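(* Let $\{ N_\alpha : A \to A \}_{\alpha \in \Omega}$ be a Nijenhuis family on an associative algebra $A$. Then the linear map $N: A \otimes \mathbf{k}\Omega \to A \otimes \mathbf{k}\Omega$, $N(a \otimes \alpha) = N_\alpha(a) \otimes \alpha$, is a Nijenhuis operator on the algebra $A \otimes \mathbf{k}\Omega$, i.e. $N(X)\bullet N(Y) = N\big(N(X)\bullet Y + X\bullet N(Y) - N(X\bullet Y)\big)$ for all $X,Y$.
   Context: $\Omega$ is a semigroup and $\mathbf{k}\Omega$ its semigroup algebra. A Nijenhuis family is a collection of linear maps $N_\alpha:A\to A$ with $N_\alpha(a) \cdot N_\beta(b) = N_{\alpha \beta} \big( N_\alpha (a) \cdot b + a \cdot N_\beta(b) - N_{\alpha \beta}(a \cdot b) \big)$ for all $a,b\in A$, $\alpha,\beta\in\Omega$. $A\otimes\mathbf{k}\Omega$ has product $(a \otimes \alpha) \bullet (b \otimes \beta) = a \cdot b \otimes \alpha \beta$. *)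

theory Defs
  imports "HOL-Library.Poly_Mapping"
begin

definition nijenhuis_family :: "('w::semigroup_mult \<Rightarrow> 'a::ring \<Rightarrow> 'a) \<Rightarrow> bool" where
  "nijenhuis_family N \<longleftrightarrow>
     (\<forall>\<alpha> \<beta> a b. N \<alpha> a * N \<beta> b =
        N (\<alpha> * \<beta>) (N \<alpha> a * b + a * N \<beta> b - N (\<alpha> * \<beta>) (a * b)))"

text \<open>A \<otimes> k\<Omega> is identified with finitely supported functions \<Omega> =>0 A:
  the element \<Sum> a_\<alpha> \<otimes> \<alpha> corresponds to \<alpha> \<mapsto> a_\<alpha>; a \<otimes> \<alpha> is Poly_Mapping.single \<alpha> a.\<close>

definition tprod :: "('w::semigroup_mult \<Rightarrow>\<^sub>0 'a::ring) \<Rightarrow> ('w \<Rightarrow>\<^sub>0 'a) \<Rightarrow> ('w \<Rightarrow>\<^sub>0 'a)" where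
  "tprod X Y = (\<Sum>\<alpha>\<in>Poly_Mapping.keys X. \<Sum>\<beta>\<in>Poly_Mapping.keys Y.
      Poly_Mapping.single (\<alpha> * \<beta>) (Poly_Mapping.lookup X \<alpha> * Poly_Mapping.lookup Y \<beta>))"

definition tensorN :: "('w \<Rightarrow> 'a::ring \<Rightarrow> 'a) \<Rightarrow> ('w \<Rightarrow>\<^sub>0 'a) \<Rightarrow> ('w \<Rightarrow>\<^sub>0 'a)" where
  "tensorN N X = (\<Sum>\<alpha>\<in>Poly_Mapping.keys X. Poly_Mapping.single \<alpha> (N \<alpha> (Poly_Mapping.lookup X \<alpha>)))"

end

theory Submission
  imports Defs
begin

lemma N_zero:
  fixes N :: "'w \<Rightarrow> 'a::ring \<Rightarrow> 'a"
  assumes linear: "\<And>\<alpha> a b. N \<alpha> (a + b) = N \<alpha> a + N \<alpha> b"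
  shows "N \<alpha> 0 = 0"
proof -
  have h: "N \<alpha> 0 = N \<alpha> 0 + N \<alpha> 0" using linear[of \<alpha> 0 0] by simp
  show ?thesis using add_cancel_right_right[of "N \<alpha> 0" "N \<alpha> 0"] h by argo
qed

lemma N_diff:
  fixes N :: "'w \<Rightarrow> 'a::ring \<Rightarrow> 'a"
  assumes linear: "\<And>\<alpha> a b. N \<alpha> (a + b) = N \<alpha> a + N \<alpha> b"
  shows "N \<alpha> (a - b) = N \<alpha> a - N \<alpha> b"
proof -
  have h: "N \<alpha> a = N \<alpha> (a - b) + N \<alpha> b" using linear[of \<alpha> "a - b" b] by simp
  show ?thesis by (simp add: h)
qed

lemma lookup_tensorN:
  fixes N :: "'w \<Rightarrow> 'a::ring \<Rightarrow> 'a"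
  assumes linear: "\<And>\<alpha> a b. N \<alpha> (a + b) = N \<alpha> a + N \<alpha> b"
  shows "Poly_Mapping.lookup (tensorN N X) \<gamma> = N \<gamma> (Poly_Mapping.lookup X \<gamma>)"
proof -
  have "Poly_Mapping.lookup (tensorN N X) \<gamma> =
     (\<Sum>\<alpha>\<in>Poly_Mapping.keys X. (if \<alpha> = \<gamma> then N \<alpha> (Poly_Mapping.lookup X \<alpha>) else 0))"
    unfolding tensorN_def lookup_sum by (intro sum.cong) (auto simp: lookup_single)
  also have "\<dots> = N \<gamma> (Poly_Mapping.lookup X \<gamma>)"
    using N_zero[where N=N, OF linear] by (auto simp: in_keys_iff)
  finally show ?thesis .
qed

lemma tensorN_add:
  fixes N :: "'w \<Rightarrow> 'a::ring \<Rightarrow> 'a"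
  assumes linear: "\<And>\<alpha> a b. N \<alpha> (a + b) = N \<alpha> a + N \<alpha> b"
  shows "tensorN N (X + Y) = tensorN N X + tensorN N Y"
  by (rule poly_mapping_eqI) (simp add: lookup_tensorN[where N=N, OF linear] lookup_add linear)

lemma tensorN_diff:
  fixes N :: "'w \<Rightarrow> 'a::ring \<Rightarrow> 'a"
  assumes linear: "\<And>\<alpha> a b. N \<alpha> (a + b) = N \<alpha> a + N \<alpha> b"
  shows "tensorN N (X - Y) = tensorN N X - tensorN N Y"
  by (rule poly_mapping_eqI) (simp add: lookup_tensorN[where N=N, OF linear] lookup_minus N_diff[where N=N, OF linear])

lemma tensorN_single:
  fixes N :: "'w \<Rightarrow> 'a::ring \<Rightarrow> 'a"
  assumes linear: "\<And>\<alpha> a b. N \<alpha> (a + b) = N \<alpha> a + N \<alpha> b"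
  shows "tensorN N (Poly_Mapping.single \<alpha> a) = Poly_Mapping.single \<alpha> (N \<alpha> a)"
  by (rule poly_mapping_eqI) (simp add: lookup_tensorN[where N=N, OF linear] lookup_single when_def N_zero[where N=N, OF linear])

lemma tensorN_sum:
  fixes N :: "'w \<Rightarrow> 'a::ring \<Rightarrow> 'a"
  assumes linear: "\<And>\<alpha> a b. N \<alpha> (a + b) = N \<alpha> a + N \<alpha> b"
  shows "tensorN N (sum f S) = (\<Sum>x\<in>S. tensorN N (f x))"
proof (induction S rule: infinite_finite_induct)
  case (infinite A)
  then show ?case by (simp add: tensorN_def)
next
  case empty
  then show ?case by (simp add: tensorN_def)
next
  case (insert x F)
  then show ?case by (simp only: sum.insert[OF insert(1,2)] tensorN_add[where N=N, OF linear] insert(3))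
qed


lemma tprod_expand:
  assumes "finite S" "Poly_Mapping.keys X \<subseteq> S" "finite T" "Poly_Mapping.keys Y \<subseteq> T"
  shows "tprod X Y = (\<Sum>\<alpha>\<in>S. \<Sum>\<beta>\<in>T.
      Poly_Mapping.single (\<alpha> * \<beta>) (Poly_Mapping.lookup X \<alpha> * Poly_Mapping.lookup Y \<beta>))"
proof -
  have "tprod X Y = (\<Sum>\<alpha>\<in>S. \<Sum>\<beta>\<in>Poly_Mapping.keys Y.
      Poly_Mapping.single (\<alpha> * \<beta>) (Poly_Mapping.lookup X \<alpha> * Poly_Mapping.lookup Y \<beta>))"
    unfolding tprod_def using assms
    by (intro sum.mono_neutral_left) (auto simp: in_keys_iff)
  also have "\<dots> = (\<Sum>\<alpha>\<in>S. \<Sum>\<beta>\<in>T.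
      Poly_Mapping.single (\<alpha> * \<beta>) (Poly_Mapping.lookup X \<alpha> * Poly_Mapping.lookup Y \<beta>))"
    using assms
    by (intro sum.cong refl sum.mono_neutral_left) (auto simp: in_keys_iff)
  finally show ?thesis .
qed

theorem proposition2p9:
  fixes N :: "'w::semigroup_mult \<Rightarrow> 'a::ring \<Rightarrow> 'a"
  assumes linear: "\<And>\<alpha> a b. N \<alpha> (a + b) = N \<alpha> a + N \<alpha> b"
    and fam: "nijenhuis_family N"
  shows "\<forall>X Y. tprod (tensorN N X) (tensorN N Y) =
           tensorN N (tprod (tensorN N X) Y + tprod X (tensorN N Y) - tensorN N (tprod X Y))"
proof (intro allI)
  fix X Y :: "'w \<Rightarrow>\<^sub>0 'a"
  define S where "S = Poly_Mapping.keys X"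
  define T where "T = Poly_Mapping.keys Y"
  have fS: "finite S" and fT: "finite T" by (auto simp: S_def T_def)
  have kNX: "Poly_Mapping.keys (tensorN N X) \<subseteq> S"
    by (auto simp: S_def in_keys_iff lookup_tensorN[where N=N, OF linear] N_zero[where N=N, OF linear])
  have kNY: "Poly_Mapping.keys (tensorN N Y) \<subseteq> T"
    by (auto simp: T_def in_keys_iff lookup_tensorN[where N=N, OF linear] N_zero[where N=N, OF linear])
  let ?x = "Poly_Mapping.lookup X" and ?y = "Poly_Mapping.lookup Y"
  have L: "tprod (tensorN N X) (tensorN N Y) = (\<Sum>\<alpha>\<in>S. \<Sum>\<beta>\<in>T.
      Poly_Mapping.single (\<alpha> * \<beta>) (N \<alpha> (?x \<alpha>) * N \<beta> (?y \<beta>)))"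
    by (simp add: tprod_expand[OF fS kNX fT kNY] lookup_tensorN[where N=N, OF linear])
  have Ss: "Poly_Mapping.keys X \<subseteq> S" and Ts: "Poly_Mapping.keys Y \<subseteq> T"
    by (auto simp: S_def T_def)
  have e1: "tprod (tensorN N X) Y = (\<Sum>\<alpha>\<in>S. \<Sum>\<beta>\<in>T.
      Poly_Mapping.single (\<alpha> * \<beta>) (N \<alpha> (?x \<alpha>) * ?y \<beta>))"
    by (simp add: tprod_expand[OF fS kNX fT Ts] lookup_tensorN[where N=N, OF linear])
  have e2: "tprod X (tensorN N Y) = (\<Sum>\<alpha>\<in>S. \<Sum>\<beta>\<in>T.
      Poly_Mapping.single (\<alpha> * \<beta>) (?x \<alpha> * N \<beta> (?y \<beta>)))"
    by (simp add: tprod_expand[OF fS Ss fT kNY] lookup_tensorN[where N=N, OF linear])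
  have e3: "tensorN N (tprod X Y) = (\<Sum>\<alpha>\<in>S. \<Sum>\<beta>\<in>T.
      Poly_Mapping.single (\<alpha> * \<beta>) (N (\<alpha> * \<beta>) (?x \<alpha> * ?y \<beta>)))"
    by (simp only: tprod_expand[OF fS Ss fT Ts] tensorN_sum[where N=N, OF linear]
         tensorN_single[where N=N, OF linear])
  have D: "tprod (tensorN N X) Y + tprod X (tensorN N Y) - tensorN N (tprod X Y) =
     (\<Sum>\<alpha>\<in>S. \<Sum>\<beta>\<in>T. Poly_Mapping.single (\<alpha> * \<beta>)
        (N \<alpha> (?x \<alpha>) * ?y \<beta> + ?x \<alpha> * N \<beta> (?y \<beta>) - N (\<alpha> * \<beta>) (?x \<alpha> * ?y \<beta>)))"
    unfolding e1 e2 e3 by (simp only: single_add single_diff sum.distrib sum_subtractf)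
  have "tensorN N (tprod (tensorN N X) Y + tprod X (tensorN N Y) - tensorN N (tprod X Y)) =
     (\<Sum>\<alpha>\<in>S. \<Sum>\<beta>\<in>T. Poly_Mapping.single (\<alpha> * \<beta>) (N \<alpha> (?x \<alpha>) * N \<beta> (?y \<beta>)))"
    unfolding D tensorN_sum[where N=N, OF linear] tensorN_single[where N=N, OF linear]
    by (simp only: fam[unfolded nijenhuis_family_def, rule_format, symmetric])
  with L show "tprod (tensorN N X) (tensorN N Y) =
           tensorN N (tprod (tensorN N X) Y + tprod X (tensorN N Y) - tensorN N (tprod X Y))"
    by simp
qed

end
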